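(* Let $(X,\varphi)$ be a convex geometry and suppose the lattice $L:=Cl(X,\varphi)$ is weakly atomic. Then $L$ is spatial. Moreover, there exist a subset $Y\subseteq X$ and a closure operator $\psi$ on $Y$ satisfying the anti-exchange axiom such that $L$ is isomorphic to $Cl(Y,\psi)$ and $\psi(\{y\})$ is completely join-irreducible in $Cl(Y,\psi)$ for every $y\in Y$.
   Context: A convex geometry is a pair $(X,\varphi)$ where $X$ is a non-empty set and $\varphi$ is a closure operator on $X$ with $\varphi(\emptyset)=\emptyset$ satisfying the anti-exchange axiom: for all $\varphi$-closed $A$ and all $x\neq y$ in $X$, if $x\in\varphi(A\cup\{y\})$ and $x\notin A$ then $y\notin\varphi(A\cup\{x\})$. $Cl(X,\varphi)$ is the complete lattice of $\varphi$-closed sets ordered by inclusion. A lattice is weakly atomic if every interval $[a,b]$ with $a<b$ contains a cover $c\prec d$. An element $y$ of a complete lattice is completely join-irreducible if it has a lower cover $y_*$ such that $z<y$ implies $z\leq y_*$. A complete lattice is spatial if every element is a join of completely join-irreducible elements. *)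

theory Defs
  imports Main
begin

text \<open>A closure operator on the ground set X (its behaviour outside subsets of X is irrelevant).\<close>
definition closure_operator :: "'a set \<Rightarrow> ('a set \<Rightarrow> 'a set) \<Rightarrow> bool" where
  "closure_operator X \<phi> \<longleftrightarrow>
     (\<forall>A. A \<subseteq> X \<longrightarrow> A \<subseteq> \<phi> A \<and> \<phi> A \<subseteq> X \<and> \<phi> (\<phi> A) = \<phi> A) \<and>
     (\<forall>A B. A \<subseteq> B \<and> B \<subseteq> X \<longrightarrow> \<phi> A \<subseteq> \<phi> B)"

definition closed_sets :: "'a set \<Rightarrow> ('a set \<Rightarrow> 'a set) \<Rightarrow> 'a set set" ("Cl") where
  "Cl X \<phi> = {A. A \<subseteq> X \<and> \<phi> A = A}"

definition anti_exchange :: "'a set \<Rightarrow> ('a set \<Rightarrow> 'a set) \<Rightarrow> bool" where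
  "anti_exchange X \<phi> \<longleftrightarrow>
     (\<forall>A \<in> Cl X \<phi>. \<forall>x \<in> X. \<forall>y \<in> X. x \<noteq> y \<longrightarrow> x \<in> \<phi> (A \<union> {y}) \<longrightarrow> x \<notin> A
        \<longrightarrow> y \<notin> \<phi> (A \<union> {x}))"

definition convex_geometry :: "'a set \<Rightarrow> ('a set \<Rightarrow> 'a set) \<Rightarrow> bool" where
  "convex_geometry X \<phi> \<longleftrightarrow> X \<noteq> {} \<and> closure_operator X \<phi> \<and> \<phi> {} = {} \<and> anti_exchange X \<phi>"

definition covers_in :: "'a set set \<Rightarrow> 'a set \<Rightarrow> 'a set \<Rightarrow> bool" where
  "covers_in L c d \<longleftrightarrow> c \<in> L \<and> d \<in> L \<and> c \<subset> d \<and> \<not> (\<exists>e \<in> L. c \<subset> e \<and> e \<subset> d)"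

definition weakly_atomic :: "'a set set \<Rightarrow> bool" where
  "weakly_atomic L \<longleftrightarrow>
     (\<forall>a \<in> L. \<forall>b \<in> L. a \<subset> b \<longrightarrow> (\<exists>c d. a \<subseteq> c \<and> d \<subseteq> b \<and> covers_in L c d))"

definition completely_join_irreducible :: "'a set set \<Rightarrow> 'a set \<Rightarrow> bool" where
  "completely_join_irreducible L y \<longleftrightarrow> y \<in> L \<and>
     (\<exists>y' \<in> L. covers_in L y' y \<and> (\<forall>z \<in> L. z \<subset> y \<longrightarrow> z \<subseteq> y'))"

definition is_join_in :: "'a set set \<Rightarrow> 'a set set \<Rightarrow> 'a set \<Rightarrow> bool" where
  "is_join_in L S a \<longleftrightarrow> a \<in> L \<and> (\<forall>s \<in> S. s \<subseteq> a) \<and>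
     (\<forall>b \<in> L. (\<forall>s \<in> S. s \<subseteq> b) \<longrightarrow> a \<subseteq> b)"

definition spatial :: "'a set set \<Rightarrow> bool" where
  "spatial L \<longleftrightarrow> (\<forall>a \<in> L. \<exists>S. S \<subseteq> {y. completely_join_irreducible L y} \<and> is_join_in L S a)"

definition order_iso :: "'a set set \<Rightarrow> 'b set set \<Rightarrow> bool" where
  "order_iso L M \<longleftrightarrow> (\<exists>f. bij_betw f L M \<and> (\<forall>A \<in> L. \<forall>B \<in> L. A \<subseteq> B \<longleftrightarrow> f A \<subseteq> f B))"

end

theory Submission imports Defs begin
lemma co_sub: "closure_operator X \<phi> \<Longrightarrow> A \<subseteq> X \<Longrightarrow> A \<subseteq> \<phi> A"
  unfolding closure_operator_def by simp
lemma co_X: "closure_operator X \<phi> \<Longrightarrow> A \<subseteq> X \<Longrightarrow> \<phi> A \<subseteq> X"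
  unfolding closure_operator_def by simp
lemma co_idem: "closure_operator X \<phi> \<Longrightarrow> A \<subseteq> X \<Longrightarrow> \<phi> (\<phi> A) = \<phi> A"
  unfolding closure_operator_def by simp
lemma co_mono: "closure_operator X \<phi> \<Longrightarrow> A \<subseteq> B \<Longrightarrow> B \<subseteq> X \<Longrightarrow> \<phi> A \<subseteq> \<phi> B"
  unfolding closure_operator_def by simp
lemma Cl_iff: "A \<in> Cl X \<phi> \<longleftrightarrow> A \<subseteq> X \<and> \<phi> A = A"
  by (simp add: closed_sets_def)
lemma co_least: "closure_operator X \<phi> \<Longrightarrow> C \<in> Cl X \<phi> \<Longrightarrow> A \<subseteq> C \<Longrightarrow> \<phi> A \<subseteq> C"
  using co_mono[of X \<phi> A C] by (simp add: Cl_iff)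
lemma co_closed: "closure_operator X \<phi> \<Longrightarrow> A \<subseteq> X \<Longrightarrow> \<phi> A \<in> Cl X \<phi>"
  using co_X[of X \<phi> A] co_idem[of X \<phi> A] by (simp add: Cl_iff)
lemma Cl_Int: assumes "closure_operator X \<phi>" "C \<in> Cl X \<phi>" "D \<in> Cl X \<phi>"
  shows "C \<inter> D \<in> Cl X \<phi>"
proof -
  have X: "C \<subseteq> X" using assms by (simp add: Cl_iff)
  have "\<phi> (C \<inter> D) \<subseteq> C" using co_least[OF assms(1) assms(2), of "C \<inter> D"] by simp
  moreover have "\<phi> (C \<inter> D) \<subseteq> D" using co_least[OF assms(1) assms(3), of "C \<inter> D"] by simp
  moreover have "C \<inter> D \<subseteq> \<phi> (C \<inter> D)" using co_sub[OF assms(1), of "C \<inter> D"] X by blast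
  ultimately show ?thesis using X by (simp add: Cl_iff subset_antisym)
qed
lemma cover_single:
  assumes cg: "convex_geometry X \<phi>" and cv: "covers_in (Cl X \<phi>) c d"
  shows "\<exists>x. x \<in> X \<and> x \<notin> c \<and> d = insert x c"
proof -
  have co: "closure_operator X \<phi>" and ae: "anti_exchange X \<phi>"
    using cg unfolding convex_geometry_def by auto
  have c: "c \<in> Cl X \<phi>" and d: "d \<in> Cl X \<phi>" and cd: "c \<subset> d"
    and nb: "\<not> (\<exists>e \<in> Cl X \<phi>. c \<subset> e \<and> e \<subset> d)"
    using cv unfolding covers_in_def by auto
  have cX: "c \<subseteq> X" and dX: "d \<subseteq> X" using c d unfolding Cl_iff by auto
  obtain x where x: "x \<in> d" "x \<notin> c" using cd by blast
  have eq: "\<phi> (c \<union> {z}) = d" if "z \<in> d" "z \<notin> c" for z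
  proof -
    have s: "c \<union> {z} \<subseteq> X" using that cX dX by blast
    have "c \<union> {z} \<subseteq> d" using that cd by blast
    hence "\<phi> (c \<union> {z}) \<subseteq> d" using co_least[OF co d] by blast
    moreover have "c \<subset> \<phi> (c \<union> {z})" using co_sub[OF co s] that by blast
    moreover have "\<phi> (c \<union> {z}) \<in> Cl X \<phi>" using co_closed[OF co s] .
    ultimately show ?thesis using nb by blast
  qed
  have "d = insert x c"
  proof (rule ccontr)
    assume "d \<noteq> insert x c"
    then obtain y where y: "y \<in> d" "y \<notin> c" "y \<noteq> x" using x cd by blast
    have "x \<in> \<phi> (c \<union> {y})" using eq[OF y(1,2)] x by blast
    moreover have "y \<in> \<phi> (c \<union> {x})" using eq[OF x] y by blast
    moreover have "x \<in> X" "y \<in> X" using x y dX by auto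
    ultimately show False using ae c x y unfolding anti_exchange_def by metis
  qed
  then show ?thesis using x dX by blast
qed

definition extpts :: "'a set \<Rightarrow> ('a set \<Rightarrow> 'a set) \<Rightarrow> 'a set" where
  "extpts X \<phi> = {x \<in> X. \<phi> {x} - {x} \<in> Cl X \<phi>}"

lemma wa_D: "weakly_atomic L \<Longrightarrow> a \<in> L \<Longrightarrow> b \<in> L \<Longrightarrow> a \<subset> b \<Longrightarrow>
    \<exists>c d. a \<subseteq> c \<and> d \<subseteq> b \<and> covers_in L c d"
  unfolding weakly_atomic_def by blast

lemma cov_D: "covers_in L c d \<Longrightarrow> c \<in> L \<and> d \<in> L"
  unfolding covers_in_def by simp

lemma key:
  assumes cg: "convex_geometry X \<phi>" and wa: "weakly_atomic (Cl X \<phi>)"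
    and b: "b \<in> Cl X \<phi>" and A: "A \<in> Cl X \<phi>" and bA: "b \<subset> A"
  shows "\<exists>x \<in> A - b. x \<in> extpts X \<phi>"
proof -
  have co: "closure_operator X \<phi>" using cg unfolding convex_geometry_def by simp
  obtain c d where cd: "b \<subseteq> c" "d \<subseteq> A" "covers_in (Cl X \<phi>) c d"
    using wa_D[OF wa b A bA] by blast
  obtain x where x: "x \<in> X" "x \<notin> c" "d = insert x c" using cover_single[OF cg cd(3)] by blast
  have c: "c \<in> Cl X \<phi>" and d: "d \<in> Cl X \<phi>" using cov_D[OF cd(3)] by auto
  have px: "\<phi> {x} \<in> Cl X \<phi>" using co_closed[OF co, of "{x}"] x by simp
  have xpx: "x \<in> \<phi> {x}" using co_sub[OF co, of "{x}"] x by simp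
  have pxd: "\<phi> {x} \<subseteq> d" using co_least[OF co d, of "{x}"] x by simp
  define K where "K = \<phi> {x} \<inter> c"
  have K: "K \<in> Cl X \<phi>" unfolding K_def using Cl_Int[OF co px c] .
  have Kx: "K \<subset> \<phi> {x}" unfolding K_def using xpx x(2) by blast
  obtain c' d' where cd': "K \<subseteq> c'" "d' \<subseteq> \<phi> {x}" "covers_in (Cl X \<phi>) c' d'"
    using wa_D[OF wa K px Kx] by blast
  obtain y where y: "y \<in> X" "y \<notin> c'" "d' = insert y c'" using cover_single[OF cg cd'(3)] by blast
  have c': "c' \<in> Cl X \<phi>" and d': "d' \<in> Cl X \<phi>" using cov_D[OF cd'(3)] by auto
  have ypx: "y \<in> \<phi> {x}" using y(3) cd'(2) by blast
  have "y \<notin> c"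
  proof
    assume "y \<in> c"
    hence "y \<in> K" unfolding K_def using ypx by blast
    thus False using cd'(1) y(2) by blast
  qed
  hence yx: "y = x" using ypx pxd x(3) by blast
  have "\<phi> {x} \<subseteq> d'" using co_least[OF co d', of "{x}"] y(3) yx by simp
  hence dd: "d' = \<phi> {x}" using cd'(2) by (rule subset_antisym[rotated])
  have "\<phi> {x} - {x} = c'" using y(2,3) yx dd by blast
  hence "x \<in> extpts X \<phi>" unfolding extpts_def using c' x(1) by simp
  moreover have "x \<in> A - b" using x cd by blast
  ultimately show ?thesis by blast
qed

lemma recon:
  assumes cg: "convex_geometry X \<phi>" and wa: "weakly_atomic (Cl X \<phi>)"
    and A: "A \<in> Cl X \<phi>"
  shows "\<phi> (A \<inter> extpts X \<phi>) = A"
proof -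
  have co: "closure_operator X \<phi>" using cg unfolding convex_geometry_def by auto
  have AX: "A \<subseteq> X" using A unfolding Cl_iff by auto
  let ?b = "\<phi> (A \<inter> extpts X \<phi>)"
  have s: "A \<inter> extpts X \<phi> \<subseteq> X" using AX by blast
  have b: "?b \<in> Cl X \<phi>" using co_closed[OF co s] .
  have bA: "?b \<subseteq> A" using co_least[OF co A, of "A \<inter> extpts X \<phi>"] by simp
  have sb: "A \<inter> extpts X \<phi> \<subseteq> ?b" using co_sub[OF co s] .
  show ?thesis
  proof (rule ccontr)
    assume "?b \<noteq> A"
    hence "?b \<subset> A" using bA by blast
    then obtain x where "x \<in> A - ?b" "x \<in> extpts X \<phi>" using key[OF cg wa b A] by blast
    then show False using sb by blast
  qed
qed

lemma cji_ext:
  assumes co: "closure_operator X \<phi>" and x: "x \<in> extpts X \<phi>"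
  shows "completely_join_irreducible (Cl X \<phi>) (\<phi> {x})"
proof -
  have xX: "x \<in> X" and c: "\<phi> {x} - {x} \<in> Cl X \<phi>" using x unfolding extpts_def by auto
  have px: "\<phi> {x} \<in> Cl X \<phi>" using co_closed[OF co] xX by simp
  have xpx: "x \<in> \<phi> {x}" using co_sub[OF co, of "{x}"] xX by simp
  have low: "z \<subseteq> \<phi> {x} - {x}" if "z \<in> Cl X \<phi>" "z \<subset> \<phi> {x}" for z
  proof -
    have "x \<notin> z" using co_least[OF co that(1), of "{x}"] that(2) by blast
    thus ?thesis using that by blast
  qed
  have ne: "\<not> (\<exists>e \<in> Cl X \<phi>. \<phi> {x} - {x} \<subset> e \<and> e \<subset> \<phi> {x})"
    using low by blast
  have ps: "\<phi> {x} - {x} \<subset> \<phi> {x}" using xpx by blast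
  have "covers_in (Cl X \<phi>) (\<phi> {x} - {x}) (\<phi> {x})"
    unfolding covers_in_def using c px ps ne by simp
  thus ?thesis unfolding completely_join_irreducible_def using px c low by blast
qed

lemma ae_D: "anti_exchange X \<phi> \<Longrightarrow> A \<in> Cl X \<phi> \<Longrightarrow> x \<in> X \<Longrightarrow> y \<in> X \<Longrightarrow> x \<noteq> y
   \<Longrightarrow> x \<in> \<phi> (A \<union> {y}) \<Longrightarrow> x \<notin> A \<Longrightarrow> y \<notin> \<phi> (A \<union> {x})"
  unfolding anti_exchange_def by blast

theorem theorem3p1:
  fixes X :: "'a set" and \<phi> :: "'a set \<Rightarrow> 'a set"
  assumes "convex_geometry X \<phi>"
    and "weakly_atomic (Cl X \<phi>)"
  shows "spatial (Cl X \<phi>) \<and>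
    (\<exists>Y \<psi>. Y \<subseteq> X \<and> closure_operator Y \<psi> \<and> anti_exchange Y \<psi> \<and>
       order_iso (Cl X \<phi>) (Cl Y \<psi>) \<and>
       (\<forall>y \<in> Y. completely_join_irreducible (Cl Y \<psi>) (\<psi> {y})))"
proof -
  note cg = assms(1) and wa = assms(2)
  have co: "closure_operator X \<phi>" and ae: "anti_exchange X \<phi>"
    using cg unfolding convex_geometry_def by simp_all
  define Y where "Y = extpts X \<phi>"
  have YX: "Y \<subseteq> X" unfolding Y_def extpts_def by auto
  have rec: "\<phi> (A \<inter> Y) = A" if "A \<in> Cl X \<phi>" for A using recon[OF cg wa that] Y_def by simp
  have xpx: "x \<in> \<phi> {x}" if "x \<in> X" for x using co_sub[OF co, of "{x}"] that by simp
  have sp: "spatial (Cl X \<phi>)"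
    unfolding spatial_def
  proof
    fix A assume A: "A \<in> Cl X \<phi>"
    have AX: "A \<subseteq> X" using A unfolding Cl_iff by simp
    let ?S = "(\<lambda>x. \<phi> {x}) ` (A \<inter> Y)"
    have "?S \<subseteq> {y. completely_join_irreducible (Cl X \<phi>) y}"
      using cji_ext[OF co] Y_def by auto
    moreover have "is_join_in (Cl X \<phi>) ?S A"
      unfolding is_join_in_def
    proof (intro conjI ballI impI)
      show "A \<in> Cl X \<phi>" by fact
      fix s assume "s \<in> ?S"
      then obtain x where "x \<in> A" "s = \<phi> {x}" by blast
      thus "s \<subseteq> A" using co_least[OF co A, of "{x}"] by simp
    next
      fix b assume b: "b \<in> Cl X \<phi>" and h: "\<forall>s\<in>?S. s \<subseteq> b"
      have "A \<inter> Y \<subseteq> b"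
      proof
        fix x assume x: "x \<in> A \<inter> Y"
        hence "\<phi> {x} \<subseteq> b" using h by blast
        thus "x \<in> b" using xpx[of x] x AX by blast
      qed
      hence "\<phi> (A \<inter> Y) \<subseteq> b" using co_least[OF co b] by blast
      thus "A \<subseteq> b" using rec[OF A] by simp
    qed
    ultimately show "\<exists>S. S \<subseteq> {y. completely_join_irreducible (Cl X \<phi>) y} \<and> is_join_in (Cl X \<phi>) S A"
      by blast
  qed
  define \<psi> where "\<psi> = (\<lambda>A. \<phi> A \<inter> Y)"
  have co2: "closure_operator Y \<psi>"
    unfolding closure_operator_def
  proof (intro conjI allI impI)
    fix A assume A: "A \<subseteq> Y"
    hence AX: "A \<subseteq> X" using YX by blast
    have sA: "A \<subseteq> \<phi> A" using co_sub[OF co AX] .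
    show "A \<subseteq> \<psi> A" unfolding \<psi>_def using sA A by blast
    show "\<psi> A \<subseteq> Y" unfolding \<psi>_def by blast
    have s2: "\<phi> A \<inter> Y \<subseteq> X" using YX by blast
    have "\<phi> (\<phi> A \<inter> Y) \<subseteq> \<phi> A" using co_least[OF co co_closed[OF co AX], of "\<phi> A \<inter> Y"] by simp
    moreover have "\<phi> A \<subseteq> \<phi> (\<phi> A \<inter> Y)"
      using co_mono[OF co, of A "\<phi> A \<inter> Y"] sA A s2 by blast
    ultimately show "\<psi> (\<psi> A) = \<psi> A" unfolding \<psi>_def by blast
  next
    fix A B assume "A \<subseteq> B \<and> B \<subseteq> Y"
    hence "A \<subseteq> B" "B \<subseteq> X" using YX by auto
    thus "\<psi> A \<subseteq> \<psi> B" unfolding \<psi>_def using co_mono[OF co, of A B] by blast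
  qed
  have ae2: "anti_exchange Y \<psi>"
    unfolding anti_exchange_def
  proof (intro ballI impI)
    fix A x y assume A: "A \<in> Cl Y \<psi>" and x: "x \<in> Y" and y: "y \<in> Y" and xy: "x \<noteq> y"
      and xin: "x \<in> \<psi> (A \<union> {y})" and xA: "x \<notin> A"
    have AY: "A \<subseteq> Y" and AA: "\<phi> A \<inter> Y = A" using A unfolding Cl_iff \<psi>_def by auto
    have AX: "A \<subseteq> X" using AY YX by blast
    have xX: "x \<in> X" and yX: "y \<in> X" using x y YX by auto
    have sA: "A \<subseteq> \<phi> A" using co_sub[OF co AX] .
    have pAX: "\<phi> A \<subseteq> X" using co_X[OF co AX] .
    have cA: "\<phi> A \<in> Cl X \<phi>" using co_closed[OF co AX] .
    have xnA: "x \<notin> \<phi> A" using AA xA x by blast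
    have "\<phi> (A \<union> {y}) \<subseteq> \<phi> (\<phi> A \<union> {y})"
      using co_mono[OF co, of "A \<union> {y}" "\<phi> A \<union> {y}"] sA pAX yX by blast
    hence "x \<in> \<phi> (\<phi> A \<union> {y})" using xin unfolding \<psi>_def by blast
    hence "y \<notin> \<phi> (\<phi> A \<union> {x})" using ae_D[OF ae cA xX yX xy _ xnA] by blast
    moreover have "\<phi> (A \<union> {x}) \<subseteq> \<phi> (\<phi> A \<union> {x})"
      using co_mono[OF co, of "A \<union> {x}" "\<phi> A \<union> {x}"] sA pAX xX by blast
    ultimately show "y \<notin> \<psi> (A \<union> {x})" unfolding \<psi>_def by blast
  qed
  have ord: "\<forall>A\<in>Cl X \<phi>. \<forall>B\<in>Cl X \<phi>. (A \<subseteq> B) = (A \<inter> Y \<subseteq> B \<inter> Y)"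
  proof (intro ballI iffI)
    fix A B assume A: "A \<in> Cl X \<phi>" and B: "B \<in> Cl X \<phi>" and h: "A \<inter> Y \<subseteq> B \<inter> Y"
    have "B \<inter> Y \<subseteq> X" using B unfolding Cl_iff by blast
    hence "\<phi> (A \<inter> Y) \<subseteq> \<phi> (B \<inter> Y)" using co_mono[OF co h] by simp
    thus "A \<subseteq> B" using rec[OF A] rec[OF B] by simp
  qed blast
  have iso: "order_iso (Cl X \<phi>) (Cl Y \<psi>)"
    unfolding order_iso_def
  proof (rule exI[of _ "\<lambda>A. A \<inter> Y"], rule conjI)
    let ?f = "\<lambda>A. A \<inter> Y"
    show "bij_betw ?f (Cl X \<phi>) (Cl Y \<psi>)"
      unfolding bij_betw_def
    proof
      show "inj_on ?f (Cl X \<phi>)"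
      proof (rule inj_onI)
        fix A B assume A: "A \<in> Cl X \<phi>" and B: "B \<in> Cl X \<phi>" and e: "A \<inter> Y = B \<inter> Y"
        have "A = \<phi> (A \<inter> Y)" using rec[OF A] by simp
        also have "\<dots> = \<phi> (B \<inter> Y)" using e by simp
        also have "\<dots> = B" using rec[OF B] .
        finally show "A = B" .
      qed
      show "?f ` Cl X \<phi> = Cl Y \<psi>"
      proof
        show "?f ` Cl X \<phi> \<subseteq> Cl Y \<psi>"
        proof
          fix B assume "B \<in> ?f ` Cl X \<phi>"
          then obtain A where A: "A \<in> Cl X \<phi>" "B = A \<inter> Y" by blast
          show "B \<in> Cl Y \<psi>" unfolding Cl_iff \<psi>_def using A rec[OF A(1)] by auto
        qed
        show "Cl Y \<psi> \<subseteq> ?f ` Cl X \<phi>"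
        proof
          fix B assume B: "B \<in> Cl Y \<psi>"
          hence BX: "B \<subseteq> X" and BB: "\<phi> B \<inter> Y = B" using YX unfolding Cl_iff \<psi>_def by auto
          have "\<phi> B \<in> Cl X \<phi>" using co_closed[OF co BX] .
          thus "B \<in> ?f ` Cl X \<phi>" by (rule image_eqI[rotated]) (simp add: BB)
        qed
      qed
    qed
  next
    show "\<forall>A\<in>Cl X \<phi>. \<forall>B\<in>Cl X \<phi>. (A \<subseteq> B) = ((\<lambda>A. A \<inter> Y) A \<subseteq> (\<lambda>A. A \<inter> Y) B)" using ord by simp
  qed
  have cji2: "\<forall>y \<in> Y. completely_join_irreducible (Cl Y \<psi>) (\<psi> {y})"
  proof
    fix y assume y: "y \<in> Y"
    have yX: "y \<in> X" and c: "\<phi> {y} - {y} \<in> Cl X \<phi>" using y unfolding Y_def extpts_def by auto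
    have ypy: "y \<in> \<psi> {y}" using co_sub[OF co2, of "{y}"] y by simp
    have p: "\<psi> {y} \<in> Cl Y \<psi>" using co_closed[OF co2, of "{y}"] y by simp
    let ?c = "\<psi> {y} - {y}"
    have cY: "?c \<subseteq> Y" unfolding \<psi>_def by blast
    have cX: "?c \<subseteq> X" using cY YX by blast
    have cc: "?c \<in> Cl Y \<psi>"
    proof -
      have "?c \<subseteq> \<phi> {y} - {y}" unfolding \<psi>_def by blast
      hence "\<phi> ?c \<subseteq> \<phi> {y} - {y}" using co_least[OF co c] by blast
      moreover have "?c \<subseteq> \<phi> ?c" using co_sub[OF co cX] .
      ultimately have "\<psi> ?c = ?c" unfolding \<psi>_def by blast
      thus ?thesis unfolding Cl_iff using cY by simp
    qed
    have low: "z \<subseteq> ?c" if "z \<in> Cl Y \<psi>" "z \<subset> \<psi> {y}" for z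
    proof -
      have "y \<notin> z"
      proof
        assume "y \<in> z"
        hence "\<psi> {y} \<subseteq> z" using co_least[OF co2 that(1), of "{y}"] by simp
        thus False using that(2) by blast
      qed
      thus ?thesis using that(2) by blast
    qed
    have ne: "\<not> (\<exists>e \<in> Cl Y \<psi>. ?c \<subset> e \<and> e \<subset> \<psi> {y})" using low by blast
    have ps: "?c \<subset> \<psi> {y}" using ypy by blast
    have "covers_in (Cl Y \<psi>) ?c (\<psi> {y})"
      unfolding covers_in_def using cc p ps ne by simp
    thus "completely_join_irreducible (Cl Y \<psi>) (\<psi> {y})"
      unfolding completely_join_irreducible_def using p cc low by blast
  qed
  show ?thesis using sp YX co2 ae2 iso cji2 by blast
qed

end
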